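(* Let $\mathcal E$ be an exchangeability system for a noncommutative probability space $(\mathcal A,\phi)$ and let $\mathcal B,\mathcal C\subseteq\mathcal A$ be subalgebras such that mixed cumulants vanish, i.e. for all $n$, all $X_1,\dots,X_n\in\mathcal B\cup\mathcal C$, every decomposition $[n]=I\sqcup J$ with $X_i\in\mathcal B$ for $i\in I$ and $X_j\in\mathcal C$ for $j\in J$, and every $\pi\in\Pi_n$ having a block that meets both $I$ and $J$, one has $K_\pi(X_1,\dots,X_n)=0$. Then $\mathcal B$ and $\mathcal C$ are $\mathcal E$-independent.
   Context: A noncommutative probability space is a pair $(\mathcal A,\phi)$ of a complex unital algebra $\mathcal A$ and a unital linear functional $\phi$. An exchangeability system $\mathcal E$ for $(\mathcal A,\phi)$ consists of a noncommutative probability space $(\mathcal U,\tilde\phi)$ and a family $(\iota_k)_{k\in\mathbb N}$ of embeddings (injective unital algebra homomorphisms) $\iota_k:\mathcal A\to\mathcal A_k\subseteq\mathcal U$ with $\tilde\phi\circ\iota_k=\phi$; write $X^{(k)}=\iota_k(X)$. It is required that for all $X_1,\dots,X_n\in\mathcal A$, all indices $i_1,\dots,i_n\in\mathbb N$ and every bijection $\sigma$ of $\mathbb N$, $\tilde\phi(X_1^{(i_1)}\cdots X_n^{(i_n)})=\tilde\phi(X_1^{(\sigma(i_1))}\cdots X_n^{(\sigma(i_n))})$; this value depends only on the kernel of $j\mapsto i_j$ and for a partition $\sigma$ of $[n]$ it is denoted $\phi_\sigma(X_1,\dots,X_n)$. $\Pi_n$ is the lattice of set partitions of $[n]$ ordered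 by refinement, with Möbius function $\mu$; $K_\pi(X_1,\dots,X_n)=\sum_{\sigma\le\pi}\phi_\sigma(X_1,\dots,X_n)\mu(\sigma,\pi)$. Subalgebras $\mathcal B,\mathcal C$ are $\mathcal E$-independent if for all $X_1,\dots,X_n\in\mathcal B\cup\mathcal C$ and every decomposition $[n]=I\sqcup J$ with $X_i\in\mathcal B$ for $i\in I$, $X_i\in\mathcal C$ for $i\in J$, one has $\phi_\pi(X_1,\dots,X_n)=\phi_{\pi'}(X_1,\dots,X_n)$ whenever $\pi,\pi'\in\Pi_n$ satisfy $\pi|_I=\pi'|_I$ and $\pi|_J=\pi'|_J$. *)

theory Defs
  imports Complex_Main "HOL-Library.Disjoint_Sets"
begin

definition complex_algebra :: "(complex \<Rightarrow> 'a::ring_1 \<Rightarrow> 'a) \<Rightarrow> bool" where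
  "complex_algebra sm \<longleftrightarrow>
     (\<forall>a b x. sm a (sm b x) = sm (a * b) x) \<and>
     (\<forall>x. sm 1 x = x) \<and>
     (\<forall>a b x. sm (a + b) x = sm a x + sm b x) \<and>
     (\<forall>a x y. sm a (x + y) = sm a x + sm a y) \<and>
     (\<forall>a x y. sm a (x * y) = sm a x * y \<and> sm a (x * y) = x * sm a y)"

definition nc_prob_space :: "(complex \<Rightarrow> 'a::ring_1 \<Rightarrow> 'a) \<Rightarrow> ('a \<Rightarrow> complex) \<Rightarrow> bool" where
  "nc_prob_space sm phi \<longleftrightarrow>
     complex_algebra sm \<and> phi 1 = 1 \<and>
     (\<forall>x y. phi (x + y) = phi x + phi y) \<and>
     (\<forall>c x. phi (sm c x) = c * phi x)"

definition alg_embedding ::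
  "(complex \<Rightarrow> 'a::ring_1 \<Rightarrow> 'a) \<Rightarrow> (complex \<Rightarrow> 'u::ring_1 \<Rightarrow> 'u) \<Rightarrow> ('a \<Rightarrow> 'u) \<Rightarrow> bool" where
  "alg_embedding smA smU f \<longleftrightarrow>
     inj f \<and> f 1 = 1 \<and>
     (\<forall>x y. f (x + y) = f x + f y) \<and>
     (\<forall>x y. f (x * y) = f x * f y) \<and>
     (\<forall>c x. f (smA c x) = smU c (f x))"

definition subalgebra :: "(complex \<Rightarrow> 'a::ring_1 \<Rightarrow> 'a) \<Rightarrow> 'a set \<Rightarrow> bool" where
  "subalgebra sm S \<longleftrightarrow>
     0 \<in> S \<and> (\<forall>x\<in>S. \<forall>y\<in>S. x + y \<in> S \<and> x * y \<in> S) \<and> (\<forall>c. \<forall>x\<in>S. sm c x \<in> S)"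

definition exch_prod :: "(nat \<Rightarrow> 'a \<Rightarrow> 'u::ring_1) \<Rightarrow> nat list \<Rightarrow> 'a list \<Rightarrow> 'u" where
  "exch_prod \<iota> is Xs = prod_list (map2 (\<lambda>i X. \<iota> i X) is Xs)"

definition exchangeability_system ::
  "(complex \<Rightarrow> 'a::ring_1 \<Rightarrow> 'a) \<Rightarrow> ('a \<Rightarrow> complex) \<Rightarrow>
   (complex \<Rightarrow> 'u::ring_1 \<Rightarrow> 'u) \<Rightarrow> ('u \<Rightarrow> complex) \<Rightarrow> (nat \<Rightarrow> 'a \<Rightarrow> 'u) \<Rightarrow> bool" where
  "exchangeability_system smA phi smU phiU \<iota> \<longleftrightarrow>
     nc_prob_space smU phiU \<and>
     (\<forall>k. alg_embedding smA smU (\<iota> k) \<and> (\<forall>X. phiU (\<iota> k X) = phi X)) \<and>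
     (\<forall>Xs is \<sigma>. length is = length Xs \<longrightarrow> bij \<sigma> \<longrightarrow>
        phiU (exch_prod \<iota> is Xs) = phiU (exch_prod \<iota> (map \<sigma> is) Xs))"

definition set_partitions :: "nat \<Rightarrow> nat set set set" where
  "set_partitions n = {P. partition_on {..<n} P}"

definition refines :: "nat set set \<Rightarrow> nat set set \<Rightarrow> bool" where
  "refines \<sigma> \<pi> \<longleftrightarrow> (\<forall>b\<in>\<sigma>. \<exists>c\<in>\<pi>. b \<subseteq> c)"

definition mobius :: "nat \<Rightarrow> nat set set \<Rightarrow> nat set set \<Rightarrow> int" where
  "mobius n = (THE \<mu>.
     (\<forall>x y. \<mu> x y \<noteq> 0 \<longrightarrow> x \<in> set_partitions n \<and> y \<in> set_partitions n \<and> refines x y) \<and>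
     (\<forall>x\<in>set_partitions n. \<forall>y\<in>set_partitions n. refines x y \<longrightarrow>
        (\<Sum>z\<in>{z\<in>set_partitions n. refines x z \<and> refines z y}. \<mu> x z) = (if x = y then 1 else 0)))"

text \<open>Canonical index function with kernel pi: j \<mapsto> least element of its block.\<close>
definition block_min :: "nat set set \<Rightarrow> nat \<Rightarrow> nat" where
  "block_min \<pi> j = Min {i. \<exists>b\<in>\<pi>. i \<in> b \<and> j \<in> b}"

text \<open>phi_pi(X_1,...,X_n) = phiU(X_1^(i_1)...X_n^(i_n)) for any i with kernel pi.\<close>
definition phi_part ::
  "(nat \<Rightarrow> 'a \<Rightarrow> 'u::ring_1) \<Rightarrow> ('u \<Rightarrow> complex) \<Rightarrow> nat set set \<Rightarrow> 'a list \<Rightarrow> complex" where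
  "phi_part \<iota> phiU \<pi> Xs = phiU (exch_prod \<iota> (map (block_min \<pi>) [0..<length Xs]) Xs)"

definition cumulant ::
  "(nat \<Rightarrow> 'a \<Rightarrow> 'u::ring_1) \<Rightarrow> ('u \<Rightarrow> complex) \<Rightarrow> nat set set \<Rightarrow> 'a list \<Rightarrow> complex" where
  "cumulant \<iota> phiU \<pi> Xs =
     (\<Sum>\<sigma>\<in>{\<sigma>\<in>set_partitions (length Xs). refines \<sigma> \<pi>}.
        phi_part \<iota> phiU \<sigma> Xs * of_int (mobius (length Xs) \<sigma> \<pi>))"

definition restrict_part :: "nat set set \<Rightarrow> nat set \<Rightarrow> nat set set" where
  "restrict_part \<pi> I = ((\<lambda>b. b \<inter> I) ` \<pi>) - {{}}"

definition E_independent ::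
  "(nat \<Rightarrow> 'a \<Rightarrow> 'u::ring_1) \<Rightarrow> ('u \<Rightarrow> complex) \<Rightarrow> 'a set \<Rightarrow> 'a set \<Rightarrow> bool" where
  "E_independent \<iota> phiU B C \<longleftrightarrow>
     (\<forall>Xs I J. set Xs \<subseteq> B \<union> C \<longrightarrow> I \<union> J = {..<length Xs} \<longrightarrow> I \<inter> J = {} \<longrightarrow>
        (\<forall>i\<in>I. Xs ! i \<in> B) \<longrightarrow> (\<forall>j\<in>J. Xs ! j \<in> C) \<longrightarrow>
        (\<forall>\<pi>\<in>set_partitions (length Xs). \<forall>\<pi>'\<in>set_partitions (length Xs).
           restrict_part \<pi> I = restrict_part \<pi>' I \<longrightarrow> restrict_part \<pi> J = restrict_part \<pi>' J \<longrightarrow>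
           phi_part \<iota> phiU \<pi> Xs = phi_part \<iota> phiU \<pi>' Xs))"

end

theory Submission
  imports Defs
begin

abbreviation SP where "SP \<equiv> set_partitions"

lemma SP_finite: "finite (SP n)"
proof -
  have "SP n \<subseteq> Pow (Pow {..<n})"
    unfolding set_partitions_def using partition_onD1 by fastforce
  then show ?thesis by (rule finite_subset) simp
qed

lemma refines_refl: "refines x x"
  unfolding refines_def by blast

lemma refines_trans: "refines x y \<Longrightarrow> refines y z \<Longrightarrow> refines x z"
  unfolding refines_def by (meson order_trans)

lemma refines_antisym:
  assumes "x \<in> SP n" "y \<in> SP n" "refines x y" "refines y x" shows "x = y"
proof -
  have "x \<subseteq> y"
  proof
    fix b assume b: "b \<in> x"
    obtain c where c: "c \<in> y" "b \<subseteq> c" using assms(3) b unfolding refines_def by blast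
    obtain d where d: "d \<in> x" "c \<subseteq> d" using assms(4) c unfolding refines_def by blast
    have "b \<noteq> {}" using b assms(1) partition_onD3 unfolding set_partitions_def by blast
    then have "b \<inter> d \<noteq> {}" using c d by blast
    then have "b = d" using b d assms(1) partition_onD2 unfolding set_partitions_def disjoint_def by blast
    then show "b \<in> y" using c d by auto
  qed
  moreover have "y \<subseteq> x"
  proof
    fix b assume b: "b \<in> y"
    obtain c where c: "c \<in> x" "b \<subseteq> c" using assms(4) b unfolding refines_def by blast
    obtain d where d: "d \<in> y" "c \<subseteq> d" using assms(3) c unfolding refines_def by blast
    have "b \<noteq> {}" using b assms(2) partition_onD3 unfolding set_partitions_def by blast
    then have "b \<inter> d \<noteq> {}" using c d by blast
    then have "b = d" using b d assms(2) partition_onD2 unfolding set_partitions_def disjoint_def by blast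
    then show "b \<in> x" using c d by auto
  qed
  ultimately show ?thesis by blast
qed

definition down :: "nat \<Rightarrow> nat set set \<Rightarrow> nat set set set" where
  "down n y = {w \<in> SP n. refines w y}"

lemma down_less:
  assumes "z \<in> SP n" "y \<in> SP n" "refines z y" "z \<noteq> y"
  shows "card (down n z) < card (down n y)"
proof (rule psubset_card_mono)
  show "finite (down n y)" unfolding down_def using SP_finite by simp
  have "down n z \<subseteq> down n y" unfolding down_def using assms refines_trans by blast
  moreover have "y \<in> down n y" "y \<notin> down n z" unfolding down_def
    using assms refines_refl refines_antisym by blast+
  ultimately show "down n z \<subset> down n y" by blast
qed

function mu_aux :: "nat \<Rightarrow> nat set set \<Rightarrow> nat set set \<Rightarrow> int" where
  "mu_aux n x y = (if x \<in> SP n \<and> y \<in> SP n \<and> refines x y then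
      (if x = y then 1 else - (\<Sum>z\<in>{z\<in>SP n. refines x z \<and> refines z y \<and> z \<noteq> y}. mu_aux n x z))
    else 0)"
  by pat_completeness auto
termination
  by (relation "measure (\<lambda>(n,x,y). card (down n y))") (auto intro: down_less)

declare mu_aux.simps[simp del]

definition MP :: "nat \<Rightarrow> (nat set set \<Rightarrow> nat set set \<Rightarrow> int) \<Rightarrow> bool" where
  "MP n \<mu> \<longleftrightarrow> (\<forall>x y. \<mu> x y \<noteq> 0 \<longrightarrow> x \<in> set_partitions n \<and> y \<in> set_partitions n \<and> refines x y) \<and>
     (\<forall>x\<in>set_partitions n. \<forall>y\<in>set_partitions n. refines x y \<longrightarrow>
        (\<Sum>z\<in>{z\<in>set_partitions n. refines x z \<and> refines z y}. \<mu> x z) = (if x = y then 1 else 0))"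

lemma MP_mu_aux: "MP n (mu_aux n)"
  unfolding MP_def
proof (rule conjI; (intro allI impI ballI)?)
  fix x y assume "mu_aux n x y \<noteq> 0"
  show "x \<in> SP n \<and> y \<in> SP n \<and> refines x y"
  proof (rule ccontr)
    assume a: "\<not> (x \<in> SP n \<and> y \<in> SP n \<and> refines x y)"
    have "mu_aux n x y = 0" by (simp only: mu_aux.simps[of n x y] if_not_P[OF a] if_False)
    then show False using \<open>mu_aux n x y \<noteq> 0\<close> by simp
  qed
next
  fix x y assume xy: "x \<in> SP n" "y \<in> SP n" "refines x y"
  let ?S = "{z\<in>SP n. refines x z \<and> refines z y}"
  show "(\<Sum>z\<in>?S. mu_aux n x z) = (if x = y then 1 else 0)"
  proof (cases "x = y")
    case True
    then have "?S = {y}" using xy refines_antisym refines_refl by blast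
    then show ?thesis using True xy by (simp add: mu_aux.simps refines_refl)
  next
    case False
    have fin: "finite ?S" using SP_finite by simp
    have yS: "y \<in> ?S" using xy refines_refl by blast
    have "(\<Sum>z\<in>?S. mu_aux n x z) = mu_aux n x y + (\<Sum>z\<in>?S - {y}. mu_aux n x z)"
      using sum.remove[OF fin yS] by simp
    also have "?S - {y} = {z\<in>SP n. refines x z \<and> refines z y \<and> z \<noteq> y}" by blast
    also have "mu_aux n x y = - (\<Sum>z\<in>{z\<in>SP n. refines x z \<and> refines z y \<and> z \<noteq> y}. mu_aux n x z)"
      using xy False by (simp add: mu_aux.simps[of n x y])
    finally show ?thesis using False by simp
  qed
qed

lemma MP_unique:
  assumes "MP n \<mu>" shows "\<mu> = mu_aux n"
proof -
  have "\<forall>x. \<mu> x y = mu_aux n x y" for y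
  proof (induction y rule: measure_induct_rule[of "\<lambda>y. card (down n y)"])
    case (less y)
    show ?case
    proof
      fix x
      show "\<mu> x y = mu_aux n x y"
      proof (cases "x \<in> SP n \<and> y \<in> SP n \<and> refines x y")
        case False
        then have "\<mu> x y = 0" using assms unfolding MP_def by blast
        moreover have "mu_aux n x y = 0" using False by (simp only: mu_aux.simps[of n x y] if_not_P[OF False] if_False)
        ultimately show ?thesis by simp
      next
        case True
        let ?S = "{z\<in>SP n. refines x z \<and> refines z y}"
        let ?R = "{z\<in>SP n. refines x z \<and> refines z y \<and> z \<noteq> y}"
        have fin: "finite ?S" using SP_finite by simp
        have yS: "y \<in> ?S" using True refines_refl by blast
        have R: "?S - {y} = ?R" by blast
        have e1: "(\<Sum>z\<in>?S. \<mu> x z) = \<mu> x y + (\<Sum>z\<in>?R. \<mu> x z)"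
          using sum.remove[OF fin yS] R by simp
        have e2: "(\<Sum>z\<in>?S. mu_aux n x z) = mu_aux n x y + (\<Sum>z\<in>?R. mu_aux n x z)"
          using sum.remove[OF fin yS] R by simp
        have e3: "(\<Sum>z\<in>?R. \<mu> x z) = (\<Sum>z\<in>?R. mu_aux n x z)"
        proof (rule sum.cong)
          fix z assume "z \<in> ?R"
          then have "card (down n z) < card (down n y)" using True down_less by blast
          then show "\<mu> x z = mu_aux n x z" using less by blast
        qed simp
        have "(\<Sum>z\<in>?S. \<mu> x z) = (\<Sum>z\<in>?S. mu_aux n x z)"
          using assms MP_mu_aux[of n] True unfolding MP_def by simp
        then show ?thesis using e1 e2 e3 by simp
      qed
    qed
  qed
  then show ?thesis by blast
qed

lemma mobius_eq: "mobius n = mu_aux n"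
  unfolding mobius_def using MP_mu_aux[of n] MP_unique[of n]
  unfolding MP_def by (intro the_equality) blast+

lemma inversion:
  fixes f :: "nat set set \<Rightarrow> complex"
  assumes pi: "\<pi> \<in> SP n"
  shows "(\<Sum>\<sigma>\<in>{\<sigma>\<in>SP n. refines \<sigma> \<pi>}. (\<Sum>\<tau>\<in>{\<tau>\<in>SP n. refines \<tau> \<sigma>}. f \<tau> * of_int (mobius n \<tau> \<sigma>))) = f \<pi>"
proof -
  let ?S = "SP n"
  have fin: "finite ?S" by (rule SP_finite)
  have "(\<Sum>\<sigma>\<in>{\<sigma>\<in>?S. refines \<sigma> \<pi>}. (\<Sum>\<tau>\<in>{\<tau>\<in>?S. refines \<tau> \<sigma>}. f \<tau> * of_int (mobius n \<tau> \<sigma>)))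
     = (\<Sum>\<sigma>\<in>?S. (\<Sum>\<tau>\<in>?S. if refines \<sigma> \<pi> \<and> refines \<tau> \<sigma> then f \<tau> * of_int (mobius n \<tau> \<sigma>) else 0))"
    using fin by (auto simp: sum.inter_filter intro!: sum.cong)
  also have "\<dots> = (\<Sum>\<tau>\<in>?S. (\<Sum>\<sigma>\<in>?S. if refines \<sigma> \<pi> \<and> refines \<tau> \<sigma> then f \<tau> * of_int (mobius n \<tau> \<sigma>) else 0))"
    by (rule sum.swap)
  also have "\<dots> = (\<Sum>\<tau>\<in>?S. if \<tau> = \<pi> then f \<tau> else 0)"
  proof (rule sum.cong[OF refl])
    fix \<tau> assume tau: "\<tau> \<in> ?S"
    have "(\<Sum>\<sigma>\<in>?S. if refines \<sigma> \<pi> \<and> refines \<tau> \<sigma> then f \<tau> * of_int (mobius n \<tau> \<sigma>) else 0)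
        = f \<tau> * of_int (\<Sum>\<sigma>\<in>{\<sigma>\<in>?S. refines \<tau> \<sigma> \<and> refines \<sigma> \<pi>}. mobius n \<tau> \<sigma>)"
      using fin by (simp add: sum_distrib_left sum.inter_filter[symmetric] conj_commute)
    also have "\<dots> = (if \<tau> = \<pi> then f \<tau> else 0)"
    proof (cases "refines \<tau> \<pi>")
      case True
      then show ?thesis using MP_mu_aux[of n] tau pi unfolding mobius_eq MP_def by simp
    next
      case False
      then have e: "{\<sigma>\<in>?S. refines \<tau> \<sigma> \<and> refines \<sigma> \<pi>} = {}" using refines_trans by blast
      have "\<tau> \<noteq> \<pi>" using False refines_refl by blast
      then show ?thesis unfolding e by simp
    qed
    finally show "(\<Sum>\<sigma>\<in>?S. if refines \<sigma> \<pi> \<and> refines \<tau> \<sigma> then f \<tau> * of_int (mobius n \<tau> \<sigma>) else 0) = (if \<tau> = \<pi> then f \<tau> else 0)" .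
  qed
  also have "\<dots> = f \<pi>" using fin pi by simp
  finally show ?thesis .
qed

lemma key:
  assumes sig: "\<sigma> \<in> SP n" and IJ: "I \<union> J = {..<n}"
    and um: "\<not> (\<exists>b\<in>\<sigma>. b \<inter> I \<noteq> {} \<and> b \<inter> J \<noteq> {})"
    and rI: "restrict_part \<pi> I = restrict_part \<pi>' I"
    and rJ: "restrict_part \<pi> J = restrict_part \<pi>' J"
    and r: "refines \<sigma> \<pi>"
  shows "refines \<sigma> \<pi>'"
  unfolding refines_def
proof
  fix b assume b: "b \<in> \<sigma>"
  have bne: "b \<noteq> {}" using b sig partition_onD3 unfolding set_partitions_def by blast
  have bsub: "b \<subseteq> {..<n}" using b sig partition_onD1 unfolding set_partitions_def by blast
  obtain c where c: "c \<in> \<pi>" "b \<subseteq> c" using r b unfolding refines_def by blast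
  have "b \<subseteq> I \<or> b \<subseteq> J" using um b bsub IJ by blast
  then show "\<exists>c\<in>\<pi>'. b \<subseteq> c"
  proof
    assume bI: "b \<subseteq> I"
    have "c \<inter> I \<in> restrict_part \<pi> I" unfolding restrict_part_def using c bI bne by blast
    then have "c \<inter> I \<in> restrict_part \<pi>' I" using rI by simp
    then obtain c' where "c' \<in> \<pi>'" "c \<inter> I = c' \<inter> I" unfolding restrict_part_def by blast
    then show ?thesis using c bI by blast
  next
    assume bJ: "b \<subseteq> J"
    have "c \<inter> J \<in> restrict_part \<pi> J" unfolding restrict_part_def using c bJ bne by blast
    then have "c \<inter> J \<in> restrict_part \<pi>' J" using rJ by simp
    then obtain c' where "c' \<in> \<pi>'" "c \<inter> J = c' \<inter> J" unfolding restrict_part_def by blast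
    then show ?thesis using c bJ by blast
  qed
qed

lemma phi_as_sum:
  assumes "\<pi> \<in> SP (length Xs)"
  shows "phi_part \<iota> phiU \<pi> Xs = (\<Sum>\<sigma>\<in>{\<sigma>\<in>SP (length Xs). refines \<sigma> \<pi>}. cumulant \<iota> phiU \<sigma> Xs)"
  unfolding cumulant_def using inversion[OF assms, of "\<lambda>\<tau>. phi_part \<iota> phiU \<tau> Xs"] by simp

theorem proposition2p10:
  fixes smA :: "complex \<Rightarrow> 'a::ring_1 \<Rightarrow> 'a" and phi :: "'a \<Rightarrow> complex"
    and smU :: "complex \<Rightarrow> 'u::ring_1 \<Rightarrow> 'u" and phiU :: "'u \<Rightarrow> complex"
    and \<iota> :: "nat \<Rightarrow> 'a \<Rightarrow> 'u" and B C :: "'a set"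
  assumes "nc_prob_space smA phi"
    and "exchangeability_system smA phi smU phiU \<iota>"
    and "subalgebra smA B" and "subalgebra smA C"
    and vanish: "\<And>Xs I J \<pi>. set Xs \<subseteq> B \<union> C \<Longrightarrow> I \<union> J = {..<length Xs} \<Longrightarrow> I \<inter> J = {} \<Longrightarrow>
        (\<forall>i\<in>I. Xs ! i \<in> B) \<Longrightarrow> (\<forall>j\<in>J. Xs ! j \<in> C) \<Longrightarrow>
        \<pi> \<in> set_partitions (length Xs) \<Longrightarrow> (\<exists>b\<in>\<pi>. b \<inter> I \<noteq> {} \<and> b \<inter> J \<noteq> {}) \<Longrightarrow>
        cumulant \<iota> phiU \<pi> Xs = 0"
  shows "E_independent \<iota> phiU B C"
  unfolding E_independent_def
proof (intro allI impI ballI)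
  fix Xs :: "'a list" and I J :: "nat set" and \<pi> \<pi>'
  assume XB: "set Xs \<subseteq> B \<union> C" and IJ: "I \<union> J = {..<length Xs}" and dis: "I \<inter> J = {}"
    and XI: "\<forall>i\<in>I. Xs ! i \<in> B" and XJ: "\<forall>j\<in>J. Xs ! j \<in> C"
    and pi: "\<pi> \<in> SP (length Xs)" and pi': "\<pi>' \<in> SP (length Xs)"
    and rI: "restrict_part \<pi> I = restrict_part \<pi>' I" and rJ: "restrict_part \<pi> J = restrict_part \<pi>' J"
  let ?n = "length Xs"
  let ?U = "{\<sigma>\<in>SP ?n. \<not> (\<exists>b\<in>\<sigma>. b \<inter> I \<noteq> {} \<and> b \<inter> J \<noteq> {})}"
  let ?K = "\<lambda>\<sigma>. cumulant \<iota> phiU \<sigma> Xs"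
  have red: "(\<Sum>\<sigma>\<in>{\<sigma>\<in>SP ?n. refines \<sigma> p}. ?K \<sigma>) = (\<Sum>\<sigma>\<in>{\<sigma>\<in>SP ?n. refines \<sigma> p} \<inter> ?U. ?K \<sigma>)" for p
  proof (rule sum.mono_neutral_right)
    show "finite {\<sigma>\<in>SP ?n. refines \<sigma> p}" using SP_finite by simp
    show "\<forall>\<sigma>\<in>{\<sigma>\<in>SP ?n. refines \<sigma> p} - {\<sigma>\<in>SP ?n. refines \<sigma> p} \<inter> ?U. ?K \<sigma> = 0"
      using vanish[OF XB IJ dis XI XJ] by blast
  qed blast
  have eq: "{\<sigma>\<in>SP ?n. refines \<sigma> \<pi>} \<inter> ?U = {\<sigma>\<in>SP ?n. refines \<sigma> \<pi>'} \<inter> ?U"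
    using key[OF _ IJ _ rI rJ] key[OF _ IJ _ rI[symmetric] rJ[symmetric]] by blast
  have "phi_part \<iota> phiU \<pi> Xs = (\<Sum>\<sigma>\<in>{\<sigma>\<in>SP ?n. refines \<sigma> \<pi>}. ?K \<sigma>)"
    by (rule phi_as_sum[OF pi])
  also have "\<dots> = (\<Sum>\<sigma>\<in>{\<sigma>\<in>SP ?n. refines \<sigma> \<pi>} \<inter> ?U. ?K \<sigma>)" by (rule red)
  also have "\<dots> = (\<Sum>\<sigma>\<in>{\<sigma>\<in>SP ?n. refines \<sigma> \<pi>'} \<inter> ?U. ?K \<sigma>)" by (simp only: eq)
  also have "\<dots> = (\<Sum>\<sigma>\<in>{\<sigma>\<in>SP ?n. refines \<sigma> \<pi>'}. ?K \<sigma>)" by (rule red[symmetric])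
  also have "\<dots> = phi_part \<iota> phiU \<pi>' Xs" by (rule phi_as_sum[OF pi', symmetric])
  finally show "phi_part \<iota> phiU \<pi> Xs = phi_part \<iota> phiU \<pi>' Xs" .
qed

end
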